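(* Let $(Q,\langle\mathsf{out},\delta\rangle)$ be a finite probabilistic automaton over a finite alphabet $A$, and let $E\subseteq A^*$ be consistent with $\varepsilon\in E$. Then the restriction map $[0,1]^{A^*}\to[0,1]^E$, $\sigma\mapsto\sigma|_E$, restricts to a bijection (an isomorphism of convex sets) from the image of $\mathsf{obs}$ onto the image of $\overline{\mathsf{row}}_E$.
   Context: A probabilistic automaton consists of a finite set of states $Q$, a transition function $\delta:Q\to\mathcal{D}(Q)^A$ and an output function $\mathsf{out}:Q\to[0,1]$, where $\mathcal{D}(Q)$ is the set of probability distributions on $Q$. Extend to $\mathcal{D}(Q)$ by $\overline{\delta}(v)(a)=\sum_{q}v(q)\,\delta(q)(a)$. Define $\mathsf{obs}:\mathcal{D}(Q)\to[0,1]^{A^*}$ by $\mathsf{obs}(v)(\varepsilon)=\sum_q v(q)\,\mathsf{out}(q)$ and $\mathsf{obs}(v)(aw)=\mathsf{obs}(\overline{\delta}(v)(a))(w)$. For $E\subseteq A^*$, $\overline{\mathsf{row}}_E:\mathcal{D}(Q)\to[0,1]^E$ is $\overline{\mathsf{row}}_E(v)(e)=\mathsf{obs}(v)(e)$; write $v_1\equiv_E v_2$ if $\overline{\mathsf{row}}_E(v_1)=\overline{\mathsf{row}}_E(v_2)$. $E$ is consistent if $v_1\equiv_E v_2$ implies $v_1\equiv_{AE}v_2$ for all $v_1,v_2\in\mathcal{D}(Q)$, where $AE=\{ae\mid a\in A,e\in E\}$. *)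

theory Defs
  imports Complex_Main "HOL-Library.FuncSet"
begin

definition distr :: "('q::finite \<Rightarrow> real) set" where
  "distr = {v. (\<forall>q. 0 \<le> v q) \<and> (\<Sum>q\<in>UNIV. v q) = 1}"

definition is_PA :: "('q::finite \<Rightarrow> real) \<Rightarrow> ('q \<Rightarrow> 'a \<Rightarrow> 'q \<Rightarrow> real) \<Rightarrow> bool" where
  "is_PA out delta \<longleftrightarrow> (\<forall>q. 0 \<le> out q \<and> out q \<le> 1) \<and> (\<forall>q a. delta q a \<in> distr)"

definition delta_bar :: "('q::finite \<Rightarrow> 'a \<Rightarrow> 'q \<Rightarrow> real) \<Rightarrow> ('q \<Rightarrow> real) \<Rightarrow> 'a \<Rightarrow> 'q \<Rightarrow> real" where
  "delta_bar delta v a = (\<lambda>q'. \<Sum>q\<in>UNIV. v q * delta q a q')"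

fun obs :: "('q::finite \<Rightarrow> real) \<Rightarrow> ('q \<Rightarrow> 'a \<Rightarrow> 'q \<Rightarrow> real) \<Rightarrow> ('q \<Rightarrow> real) \<Rightarrow> 'a list \<Rightarrow> real" where
  "obs out delta v [] = (\<Sum>q\<in>UNIV. v q * out q)"
| "obs out delta v (a # w) = obs out delta (delta_bar delta v a) w"

text \<open>The row map, with values in [0,1]^E rendered as functions restricted to E.\<close>
definition row_bar :: "('q::finite \<Rightarrow> real) \<Rightarrow> ('q \<Rightarrow> 'a \<Rightarrow> 'q \<Rightarrow> real) \<Rightarrow> 'a list set \<Rightarrow> ('q \<Rightarrow> real) \<Rightarrow> 'a list \<Rightarrow> real" where
  "row_bar out delta E v = restrict (obs out delta v) E"

definition equivE :: "('q::finite \<Rightarrow> real) \<Rightarrow> ('q \<Rightarrow> 'a \<Rightarrow> 'q \<Rightarrow> real) \<Rightarrow> 'a list set \<Rightarrow> ('q \<Rightarrow> real) \<Rightarrow> ('q \<Rightarrow> real) \<Rightarrow> bool" where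
  "equivE out delta E v1 v2 \<longleftrightarrow> row_bar out delta E v1 = row_bar out delta E v2"

definition AE :: "'a list set \<Rightarrow> 'a list set" where
  "AE E = {a # e | a e. e \<in> E}"

definition consistent :: "('q::finite \<Rightarrow> real) \<Rightarrow> ('q \<Rightarrow> 'a \<Rightarrow> 'q \<Rightarrow> real) \<Rightarrow> 'a list set \<Rightarrow> bool" where
  "consistent out delta E \<longleftrightarrow> (\<forall>v1\<in>distr. \<forall>v2\<in>distr.
      equivE out delta E v1 v2 \<longrightarrow> equivE out delta (AE E) v1 v2)"

end

theory Submission
  imports Defs
begin

lemma delta_bar_distr:
  assumes "is_PA out delta" "v \<in> distr"
  shows "delta_bar delta v a \<in> distr"
proof -
  have d: "\<And>q. delta q a \<in> distr" using assms(1) unfolding is_PA_def by blast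
  have nn: "\<forall>q'. 0 \<le> delta_bar delta v a q'"
    using assms(2) d unfolding distr_def delta_bar_def by (auto intro!: sum_nonneg)
  have "(\<Sum>q'\<in>UNIV. delta_bar delta v a q') = (\<Sum>q\<in>UNIV. \<Sum>q'\<in>UNIV. v q * delta q a q')"
    unfolding delta_bar_def by (rule sum.swap)
  also have "\<dots> = (\<Sum>q\<in>UNIV. v q * (\<Sum>q'\<in>UNIV. delta q a q'))"
    by (simp add: sum_distrib_left)
  also have "\<dots> = (\<Sum>q\<in>UNIV. v q)" using d unfolding distr_def by simp
  also have "\<dots> = 1" using assms(2) unfolding distr_def by simp
  finally show ?thesis using nn unfolding distr_def by simp
qed

lemma key:
  assumes "is_PA out delta" "consistent out delta E" "[] \<in> E"
  shows "\<forall>v1\<in>distr. \<forall>v2\<in>distr. equivE out delta E v1 v2 \<longrightarrow> obs out delta v1 w = obs out delta v2 w"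
proof (induction w)
  case Nil
  then show ?case using assms(3) unfolding equivE_def row_bar_def
    by (metis restrict_apply')
next
  case (Cons a w)
  show ?case
  proof (intro ballI impI)
    fix v1 v2 assume v: "v1 \<in> distr" "v2 \<in> distr" and eq: "equivE out delta E v1 v2"
    have eq2: "equivE out delta (AE E) v1 v2" using assms(2) v eq unfolding consistent_def by blast
    have "equivE out delta E (delta_bar delta v1 a) (delta_bar delta v2 a)"
      unfolding equivE_def row_bar_def
    proof
      fix e show "restrict (obs out delta (delta_bar delta v1 a)) E e = restrict (obs out delta (delta_bar delta v2 a)) E e"
      proof (cases "e \<in> E")
        case True
        hence "a # e \<in> AE E" unfolding AE_def by blast
        hence "obs out delta v1 (a # e) = obs out delta v2 (a # e)"
          using eq2 unfolding equivE_def row_bar_def by (metis restrict_apply')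
        thus ?thesis using True by simp
      qed simp
    qed
    thus "obs out delta v1 (a # w) = obs out delta v2 (a # w)"
      using Cons delta_bar_distr[OF assms(1) v(1)] delta_bar_distr[OF assms(1) v(2)] by simp
  qed
qed

theorem mainTheorem8:
  fixes out :: "'q::finite \<Rightarrow> real" and delta :: "'q \<Rightarrow> 'a::finite \<Rightarrow> 'q \<Rightarrow> real"
    and E :: "'a list set"
  assumes "is_PA out delta"
    and "consistent out delta E"
    and "[] \<in> E"
  shows "bij_betw (\<lambda>\<sigma>. restrict \<sigma> E) (obs out delta ` distr) (row_bar out delta E ` distr)"
proof (rule bij_betw_imageI)
  show "inj_on (\<lambda>\<sigma>. restrict \<sigma> E) (obs out delta ` distr)"
  proof (rule inj_onI)
    fix s1 s2 assume "s1 \<in> obs out delta ` distr" "s2 \<in> obs out delta ` distr"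
      and r: "restrict s1 E = restrict s2 E"
    then obtain v1 v2 where v: "v1 \<in> distr" "v2 \<in> distr" "s1 = obs out delta v1" "s2 = obs out delta v2"
      by blast
    have "equivE out delta E v1 v2" using r v unfolding equivE_def row_bar_def by simp
    thus "s1 = s2" using key[OF assms] v by blast
  qed
  show "(\<lambda>\<sigma>. restrict \<sigma> E) ` obs out delta ` distr = row_bar out delta E ` distr"
    unfolding row_bar_def image_image by simp
qed

end
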